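(* Let $\pi:(X,T)\to(Y,T)$ be an extension (factor map) of minimal systems and $d\in\mathbb{N}$. (1) If $Y$ is a $d$-step topological characteristic factor of $X$ and $\pi$ is open, then $(\pi^{(d+1)})^{-1}(N_{d+1}(Y))=N_{d+1}(X)$. (2) If $N_{d+1}(X)$ is $\pi^{(d+1)}$-saturated, i.e. $(\pi^{(d+1)})^{-1}(\pi^{(d+1)}(N_{d+1}(X)))=N_{d+1}(X)$, then $Y$ is a $d$-step topological characteristic factor of $X$.
   Context: $\pi^{(m)}=\pi\times\cdots\times\pi$ ($m$ times). $N_m(X)=\overline{\{(T^{p+q}x,\dots,T^{p+mq}x):x\in X,p,q\in\mathbb{Z}\}}$. $Y$ is a $d$-step topological characteristic factor of $X$ (via $\pi$) if there is a dense $G_\delta$ subset $\Omega\subset X$ such that for every $x\in\Omega$ the set $L_x=\overline{\{(T^nx,T^{2n}x,\dots,T^{dn}x):n\in\mathbb{Z}\}}\subset X^d$ satisfies $(\pi^{(d)})^{-1}(\pi^{(d)}(L_x))=L_x$. *)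

theory Defs
  imports "HOL-Analysis.Analysis" "HOL-Library.FuncSet"
begin

definition tds :: "('a::metric_space \<Rightarrow> 'a) \<Rightarrow> bool" where
  "tds T \<longleftrightarrow> compact (UNIV :: 'a set) \<and> bij T \<and> continuous_on UNIV T
     \<and> continuous_on UNIV (inv T)"

definition tpow :: "('a \<Rightarrow> 'a) \<Rightarrow> int \<Rightarrow> 'a \<Rightarrow> 'a" where
  "tpow T n = (if n \<ge> 0 then T ^^ nat n else inv T ^^ nat (- n))"

definition minimal_sys :: "('a::metric_space \<Rightarrow> 'a) \<Rightarrow> bool" where
  "minimal_sys T \<longleftrightarrow> tds T \<and>
     (\<forall>A. closed A \<and> T ` A \<subseteq> A \<longrightarrow> A = {} \<or> A = UNIV)"

definition factor_map :: "('a::metric_space \<Rightarrow> 'a) \<Rightarrow> ('b::metric_space \<Rightarrow> 'b) \<Rightarrow> ('a \<Rightarrow> 'b) \<Rightarrow> bool" where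
  "factor_map T S \<pi> \<longleftrightarrow> tds T \<and> tds S \<and> continuous_on UNIV \<pi> \<and> surj \<pi> \<and> \<pi> \<circ> T = S \<circ> \<pi>"

definition is_open_map :: "('a::topological_space \<Rightarrow> 'b::topological_space) \<Rightarrow> bool" where
  "is_open_map f \<longleftrightarrow> (\<forall>U. open U \<longrightarrow> open (f ` U))"

text \<open>X^m is modelled as the extensional functions on {1..m} (coordinates 1..m), with the
  product topology on functions nat => 'a.\<close>

definition pi_pow :: "('a \<Rightarrow> 'b) \<Rightarrow> nat \<Rightarrow> (nat \<Rightarrow> 'a) \<Rightarrow> (nat \<Rightarrow> 'b)" where
  "pi_pow \<pi> m f = restrict (\<lambda>i. \<pi> (f i)) {1..m}"

definition pi_pow_preimage :: "('a \<Rightarrow> 'b) \<Rightarrow> nat \<Rightarrow> (nat \<Rightarrow> 'b) set \<Rightarrow> (nat \<Rightarrow> 'a) set" where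
  "pi_pow_preimage \<pi> m S = {f \<in> extensional {1..m}. pi_pow \<pi> m f \<in> S}"

definition Nset :: "('a::topological_space \<Rightarrow> 'a) \<Rightarrow> nat \<Rightarrow> (nat \<Rightarrow> 'a) set" where
  "Nset T m = closure {restrict (\<lambda>i. tpow T (p + int i * q) x) {1..m} | x p q. True}"

definition Lset :: "('a::topological_space \<Rightarrow> 'a) \<Rightarrow> nat \<Rightarrow> 'a \<Rightarrow> (nat \<Rightarrow> 'a) set" where
  "Lset T d x = closure {restrict (\<lambda>i. tpow T (int i * n) x) {1..d} | n. True}"

definition char_factor :: "('a::metric_space \<Rightarrow> 'a) \<Rightarrow> ('a \<Rightarrow> 'b) \<Rightarrow> nat \<Rightarrow> bool" where
  "char_factor T \<pi> d \<longleftrightarrow> (\<exists>\<Omega>. gdelta_in euclidean \<Omega> \<and> closure \<Omega> = UNIV \<and>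
     (\<forall>x\<in>\<Omega>. pi_pow_preimage \<pi> d (pi_pow \<pi> d ` Lset T d x) = Lset T d x))"

end

theory Submission imports Defs begin
lemma closed_extensional: "closed (extensional I :: (nat \<Rightarrow> 'a::t2_space) set)"
proof -
  have "extensional I = (\<Inter>i\<in>-I. {h::nat\<Rightarrow>'a. h i = undefined})"
    by (auto simp: extensional_def)
  moreover have "closed {h::nat\<Rightarrow>'a. h i = undefined}" for i
    by (rule closed_Collect_eq[of "\<lambda>h. h i" "\<lambda>_. undefined"]) (auto intro: continuous_on_const)
  ultimately show ?thesis by auto
qed

lemma finite_eps0:
  assumes "finite J" "\<And>j. j \<in> J \<Longrightarrow> \<exists>e>0. \<forall>e'. 0 < e' \<and> e' \<le> e \<longrightarrow> P j e'"
  shows "\<exists>e>(0::real). \<forall>j\<in>J. \<forall>e'. 0 < e' \<and> e' \<le> e \<longrightarrow> P j e'"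
  using assms
proof (induction J rule: finite_induct)
  case empty then show ?case by (auto intro: exI[of _ 1])
next
  case (insert a J)
  then obtain e1 where e1: "e1 > 0" "\<forall>j\<in>J. \<forall>e'. 0 < e' \<and> e' \<le> e1 \<longrightarrow> P j e'" by auto
  obtain e2 where e2: "e2 > 0" "\<forall>e'. 0 < e' \<and> e' \<le> e2 \<longrightarrow> P a e'" using insert.prems by auto
  show ?case
    by (rule exI[of _ "min e1 e2"]) (use e1 e2 in auto)
qed

lemma finite_eps:
  assumes "finite J" "\<And>j. j \<in> J \<Longrightarrow> \<exists>e>0. \<forall>e'. 0 < e' \<and> e' \<le> e \<longrightarrow> P j e'"
  shows "\<exists>e>(0::real). \<forall>j\<in>J. P j e"
proof -
  obtain e where "e > 0" "\<forall>j\<in>J. \<forall>e'. 0 < e' \<and> e' \<le> e \<longrightarrow> P j e'"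
    using finite_eps0[of J P] assms by blast
  then show ?thesis by auto
qed

lemma closure_ext:
  fixes A :: "(nat \<Rightarrow> 'a::metric_space) set"
  assumes A: "A \<subseteq> extensional {1..m}"
  shows "f \<in> closure A \<longleftrightarrow> f \<in> extensional {1..m} \<and> (\<forall>e>0. \<exists>g\<in>A. \<forall>i\<in>{1..m}. dist (f i) (g i) < e)"
proof
  assume f: "f \<in> closure A"
  have "closure A \<subseteq> extensional {1..m}"
    using A closed_extensional by (rule closure_minimal)
  with f have "f \<in> extensional {1..m}" by auto
  moreover have "\<exists>g\<in>A. \<forall>i\<in>{1..m}. dist (f i) (g i) < e" if e: "e > 0" for e
  proof -
    define Ob where "Ob = (\<Inter>i\<in>{1..m}. {h::nat\<Rightarrow>'a. dist (f i) (h i) < e})"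
    have "open {h::nat\<Rightarrow>'a. dist (f i) (h i) < e}" for i
      by (rule open_Collect_less) (auto intro!: continuous_intros)
    then have "open Ob" unfolding Ob_def by auto
    moreover have "f \<in> Ob" using e by (auto simp: Ob_def)
    ultimately have "A \<inter> Ob \<noteq> {}" using f closure_iff_nhds_not_empty by blast
    then show ?thesis by (auto simp: Ob_def)
  qed
  ultimately show "f \<in> extensional {1..m} \<and> (\<forall>e>0. \<exists>g\<in>A. \<forall>i\<in>{1..m}. dist (f i) (g i) < e)" by blast
next
  assume R: "f \<in> extensional {1..m} \<and> (\<forall>e>0. \<exists>g\<in>A. \<forall>i\<in>{1..m}. dist (f i) (g i) < e)"
  show "f \<in> closure A"
    unfolding closure_iff_nhds_not_empty
  proof (intro allI impI)
    fix U S assume SU: "S \<subseteq> U" and S: "open S" and fS: "f \<in> S"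
    have "openin (product_topology (\<lambda>i. euclidean) UNIV) S" using S by (simp add: open_fun_def)
    from product_topology_open_contains_basis[OF this fS] obtain X where
      X: "f \<in> (\<Pi>\<^sub>E i\<in>UNIV. X i)" "\<forall>i. open (X i)" "(\<Pi>\<^sub>E i\<in>UNIV. X i) \<subseteq> S"
      by auto
    have "\<exists>e>0. \<forall>e'. 0 < e' \<and> e' \<le> e \<longrightarrow> ball (f i) e' \<subseteq> X i" if "i \<in> {1..m}" for i
    proof -
      from X have "f i \<in> X i" "open (X i)" by auto
      then obtain e where "e > 0" "ball (f i) e \<subseteq> X i" using open_contains_ball by blast
      then show ?thesis by (intro exI[of _ e]) auto
    qed
    note bx = this
    obtain e where e: "e > 0" "\<forall>i\<in>{1..m}. ball (f i) e \<subseteq> X i"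
      using finite_eps[of "{1..m}" "\<lambda>i e. ball (f i) e \<subseteq> X i"] bx by auto
    from R e obtain g where g: "g \<in> A" "\<forall>i\<in>{1..m}. dist (f i) (g i) < e" by blast
    have "g \<in> (\<Pi>\<^sub>E i\<in>UNIV. X i)"
    proof -
      have "g i \<in> X i" for i
      proof (cases "i \<in> {1..m}")
        case True then show ?thesis using g e by (auto simp: subset_iff)
      next
        case False
        then have "g i = f i" using g A R by (auto simp: extensional_def)
        then show ?thesis using X by auto
      qed
      then show ?thesis by auto
    qed
    then show "A \<inter> U \<noteq> {}" using g X SU by blast
  qed
qed

lemma continuous_funpow: "continuous_on UNIV (f::'a::topological_space \<Rightarrow> 'a) \<Longrightarrow> continuous_on UNIV (f ^^ n)"
proof (induction n)
  case 0 have "f ^^ 0 = (\<lambda>x. x)" by auto then show ?case by (simp only: continuous_on_id)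
next
  case (Suc n)
  then show ?case by (simp add: continuous_on_compose2[of UNIV f UNIV "f ^^ n"])
qed

lemma continuous_tpow:
  assumes "continuous_on UNIV T" "continuous_on UNIV (inv T)"
  shows "continuous_on UNIV (tpow T n)"
  unfolding tpow_def using assms by (auto intro: continuous_funpow)

lemma tpow_0[simp]: "tpow T 0 x = x" by (simp add: tpow_def)

lemma tpow_succ:
  assumes "bij T" shows "tpow T (n + 1) x = T (tpow T n x)"
proof (cases "n \<ge> 0")
  case True
  then have "nat (n+1) = Suc (nat n)" by auto
  then show ?thesis using True by (simp add: tpow_def)
next
  case False
  then have "nat (-n) = Suc (nat (-(n+1)))" by auto
  then have "tpow T n x = inv T ((inv T ^^ nat (-(n+1))) x)" using False by (simp add: tpow_def)
  moreover have "tpow T (n+1) x = (inv T ^^ nat (-(n+1))) x"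
    using False by (cases "n + 1 = 0") (auto simp: tpow_def)
  ultimately show ?thesis using assms by (simp add: bij_is_surj surj_f_inv_f)
qed

lemma tpow_pred:
  assumes "bij T" shows "tpow T (n - 1) x = inv T (tpow T n x)"
proof -
  have "tpow T n x = T (tpow T (n - 1) x)" using tpow_succ[OF assms, of "n - 1"] by simp
  then show ?thesis using assms by (simp add: bij_is_inj inv_f_f)
qed

lemma tpow_add:
  assumes "bij T" shows "tpow T a (tpow T b x) = tpow T (a + b) x"
proof (induction a rule: int_induct[where k=0])
  case base then show ?case by simp
next
  case (step1 i)
  have "tpow T (i + 1 + b) x = T (tpow T (i + b) x)"
    using tpow_succ[OF assms, of "i + b"] by (simp add: algebra_simps)
  then show ?case using step1 tpow_succ[OF assms] by simp
next
  case (step2 i)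
  have "tpow T (i - 1 + b) x = inv T (tpow T (i + b) x)"
    using tpow_pred[OF assms, of "i + b"] by (simp add: algebra_simps)
  then show ?case using step2 tpow_pred[OF assms] by simp
qed

lemma tpow_semiconj:
  assumes "bij T" "bij S" "\<pi> \<circ> T = S \<circ> \<pi>"
  shows "\<pi> (tpow T n x) = tpow S n (\<pi> x)"
proof (induction n rule: int_induct[where k=0])
  case base then show ?case by simp
next
  case (step1 i)
  have "\<pi> (T y) = S (\<pi> y)" for y using assms(3) by (metis comp_apply)
  then show ?case using step1 tpow_succ[OF assms(1)] tpow_succ[OF assms(2)] by simp
next
  case (step2 i)
  have c: "\<pi> (T y) = S (\<pi> y)" for y using assms(3) by (metis comp_apply)
  have "\<pi> (inv T y) = inv S (\<pi> y)" for y
  proof -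
    have "\<pi> y = S (\<pi> (inv T y))" using c[of "inv T y"] assms(1)
      by (simp add: bij_is_surj surj_f_inv_f)
    then show ?thesis using assms(2) by (simp add: bij_is_inj inv_f_f)
  qed
  then show ?case using step2 tpow_pred[OF assms(1)] tpow_pred[OF assms(2)] by simp
qed


lemma Nset_mem:
  fixes T :: "'a::metric_space \<Rightarrow> 'a"
  shows "f \<in> Nset T m \<longleftrightarrow> f \<in> extensional {1..m} \<and>
    (\<forall>e>0. \<exists>x p q. \<forall>i\<in>{1..m}. dist (f i) (tpow T (p + int i * q) x) < e)"
proof -
  have A: "{restrict (\<lambda>i. tpow T (p + int i * q) x) {1..m} | x p q. True} \<subseteq> extensional {1..m}"
    by auto
  show ?thesis unfolding Nset_def closure_ext[OF A]
    by (intro conj_cong refl all_cong1 imp_cong) fastforce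
qed

lemma Lset_mem:
  fixes T :: "'a::metric_space \<Rightarrow> 'a"
  shows "f \<in> Lset T d x \<longleftrightarrow> f \<in> extensional {1..d} \<and>
    (\<forall>e>0. \<exists>n. \<forall>i\<in>{1..d}. dist (f i) (tpow T (int i * n) x) < e)"
proof -
  have A: "{restrict (\<lambda>i. tpow T (int i * n) x) {1..d} | n. True} \<subseteq> extensional {1..d}"
    by auto
  show ?thesis unfolding Lset_def closure_ext[OF A]
    by (intro conj_cong refl all_cong1 imp_cong) fastforce
qed


lemma part1:
  fixes T :: "'a::metric_space \<Rightarrow> 'a" and S :: "'b::metric_space \<Rightarrow> 'b" and \<pi> :: "'a \<Rightarrow> 'b"
  assumes bT: "bij T" and bS: "bij S" and cS: "continuous_on UNIV S" "continuous_on UNIV (inv S)"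
    and cpi: "continuous_on UNIV \<pi>" and cpt: "compact (UNIV :: 'a set)"
    and conj: "\<pi> \<circ> T = S \<circ> \<pi>" and opm: "is_open_map \<pi>"
    and dense: "closure \<Omega> = UNIV"
    and sat: "\<forall>x\<in>\<Omega>. pi_pow_preimage \<pi> d (pi_pow \<pi> d ` Lset T d x) = Lset T d x"
  shows "pi_pow_preimage \<pi> (d+1) (Nset S (d+1)) = Nset T (d+1)"
proof
  let ?m = "d+1"
  show "Nset T ?m \<subseteq> pi_pow_preimage \<pi> ?m (Nset S ?m)"
  proof
    fix f assume f: "f \<in> Nset T ?m"
    have uc: "uniformly_continuous_on UNIV \<pi>" using compact_uniformly_continuous[OF cpi cpt] .
    have "pi_pow \<pi> ?m f \<in> Nset S ?m"
      unfolding Nset_mem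
    proof (intro conjI allI impI)
      show "pi_pow \<pi> ?m f \<in> extensional {1..?m}" by (simp add: pi_pow_def)
      fix e :: real assume e: "e > 0"
      then obtain \<delta> where \<delta>: "\<delta> > 0" "\<forall>a b. dist a b < \<delta> \<longrightarrow> dist (\<pi> a) (\<pi> b) < e"
        using uc unfolding uniformly_continuous_on_def by (metis UNIV_I dist_commute)
      then obtain x p q where xpq: "\<forall>i\<in>{1..?m}. dist (f i) (tpow T (p + int i * q) x) < \<delta>"
        using f unfolding Nset_mem by blast
      show "\<exists>x p q. \<forall>i\<in>{1..?m}. dist (pi_pow \<pi> ?m f i) (tpow S (p + int i * q) x) < e"
        apply (rule exI[of _ "\<pi> x"], rule exI[of _ p], rule exI[of _ q])
        using xpq \<delta> by (auto simp: pi_pow_def tpow_semiconj[OF bT bS conj, symmetric])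
    qed
    then show "f \<in> pi_pow_preimage \<pi> ?m (Nset S ?m)"
      using f unfolding pi_pow_preimage_def Nset_mem by blast
  qed
next
  let ?m = "d+1"
  show "pi_pow_preimage \<pi> ?m (Nset S ?m) \<subseteq> Nset T ?m"
  proof
    fix f assume "f \<in> pi_pow_preimage \<pi> ?m (Nset S ?m)"
    then have fext: "f \<in> extensional {1..?m}" and fN: "pi_pow \<pi> ?m f \<in> Nset S ?m"
      unfolding pi_pow_preimage_def by auto
    have "\<exists>x p q. \<forall>i\<in>{1..?m}. dist (f i) (tpow T (p + int i * q) x) < e" if e: "e > 0" for e :: real
    proof -
      define U where "U i = ball (f i) (e/2)" for i
      have oU: "open (\<pi> ` U i)" for i using opm unfolding is_open_map_def U_def by auto
      have "\<exists>\<epsilon>>0. \<forall>\<epsilon>'. 0 < \<epsilon>' \<and> \<epsilon>' \<le> \<epsilon> \<longrightarrow> ball (\<pi> (f i)) \<epsilon>' \<subseteq> \<pi> ` U i" for i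
      proof -
        have "\<pi> (f i) \<in> \<pi> ` U i" using e by (auto simp: U_def)
        then obtain \<epsilon> where "\<epsilon> > 0" "ball (\<pi> (f i)) \<epsilon> \<subseteq> \<pi> ` U i"
          using oU open_contains_ball by blast
        then show ?thesis by (intro exI[of _ \<epsilon>]) auto
      qed
      then obtain \<epsilon> where \<epsilon>: "\<epsilon> > 0" "\<forall>i\<in>{1..?m}. ball (\<pi> (f i)) \<epsilon> \<subseteq> \<pi> ` U i"
        using finite_eps[of "{1..?m}" "\<lambda>i \<epsilon>. ball (\<pi> (f i)) \<epsilon> \<subseteq> \<pi> ` U i"] by auto
      obtain y p q where ypq: "\<forall>i\<in>{1..?m}. dist (pi_pow \<pi> ?m f i) (tpow S (p + int i * q) y) < \<epsilon>"
        using fN \<epsilon>(1) unfolding Nset_mem by blast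
      define y1 where "y1 = tpow S (p + q) y"
      define V where "V = (\<Inter>i\<in>{1..?m}. tpow S (int (i - 1) * q) -` (\<pi> ` U i))"
      have shift: "tpow S (int (i - 1) * q) y1 = tpow S (p + int i * q) y" if "i \<in> {1..?m}" for i
      proof -
        have "int (i - 1) * q + (p + q) = p + int i * q" using that by (simp add: algebra_simps of_nat_diff)
        then show ?thesis unfolding y1_def tpow_add[OF bS] by (metis (no_types))
      qed
      have y1V: "y1 \<in> V"
      proof -
        have "tpow S (p + int i * q) y \<in> \<pi> ` U i" if "i \<in> {1..?m}" for i
          using ypq \<epsilon> that by (auto simp: pi_pow_def subset_iff dist_commute)
        then show ?thesis unfolding V_def using shift by auto
      qed
      have oV: "open V" unfolding V_def
        by (intro open_INT finite_atLeastAtMost ballI open_vimage oU continuous_tpow cS)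
      have "y1 \<in> \<pi> ` U 1" using y1V unfolding V_def by (force dest: bspec[of _ _ 1])
      then obtain x1 where x1: "x1 \<in> U 1" "\<pi> x1 = y1" by auto
      define W where "W = U 1 \<inter> \<pi> -` V"
      have oW: "open W" unfolding W_def U_def by (intro open_Int open_ball open_vimage oV cpi)
      have "x1 \<in> W" using x1 y1V by (auto simp: W_def)
      then obtain x' where x': "x' \<in> \<Omega>" "x' \<in> W"
        using dense oW closure_iff_nhds_not_empty[of x1 \<Omega>] by blast
      have "\<exists>z. z \<in> U (j+1) \<and> \<pi> z = \<pi> (tpow T (int j * q) x')" if "j \<in> {1..d}" for j
      proof -
        have "tpow S (int ((j+1) - 1) * q) (\<pi> x') \<in> \<pi> ` U (j+1)"
          using x' that unfolding W_def V_def by (force dest: bspec[of _ _ "j+1"])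
        then show ?thesis using tpow_semiconj[OF bT bS conj] by (auto simp: image_iff)
      qed
      then obtain zz where zz: "\<forall>j\<in>{1..d}. zz j \<in> U (j+1) \<and> \<pi> (zz j) = \<pi> (tpow T (int j * q) x')"
        by metis
      define z where "z = restrict zz {1..d}"
      define h where "h = restrict (\<lambda>j. tpow T (int j * q) x') {1..d}"
      have "h \<in> Lset T d x'" unfolding h_def Lset_def
        by (rule set_mp[OF closure_subset]) blast
      moreover have "pi_pow \<pi> d z = pi_pow \<pi> d h"
        using zz by (auto simp: pi_pow_def z_def h_def)
      ultimately have "z \<in> pi_pow_preimage \<pi> d (pi_pow \<pi> d ` Lset T d x')"
        unfolding pi_pow_preimage_def z_def by (auto simp: image_iff)
      then have "z \<in> Lset T d x'" using sat x' by auto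
      then obtain n where n: "\<forall>j\<in>{1..d}. dist (z j) (tpow T (int j * n) x') < e/2"
        unfolding Lset_mem using e by (meson half_gt_zero)
      show ?thesis
      proof (rule exI[of _ x'], rule exI[of _ "-n"], rule exI[of _ n], intro ballI)
        fix i assume i: "i \<in> {1..?m}"
        show "dist (f i) (tpow T (- n + int i * n) x') < e"
        proof (cases "i = 1")
          case True
          have "x' \<in> U 1" using x' by (auto simp: W_def)
          then have "dist (f 1) x' < e/2" by (simp add: U_def)
          then have "dist (f 1) x' < e" using e by linarith
          then show ?thesis using True by simp
        next
          case False
          obtain j where j_def: "j = i - 1" by simp
          have j: "i = j + 1" "j \<in> {1..d}" using i False by (auto simp: j_def)
          have ex: "- n + int i * n = int j * n" using j by (simp add: algebra_simps)
          have "dist (f i) (zz j) < e/2" using zz j by (auto simp: U_def)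
          moreover have "dist (zz j) (tpow T (int j * n) x') < e/2" using n j by (auto simp: z_def)
          ultimately have "dist (f i) (tpow T (int j * n) x') < e/2 + e/2"
            using dist_triangle[of "f i" "tpow T (int j * n) x'" "zz j"] by linarith
          then show ?thesis unfolding ex by simp
        qed
      qed
    qed
    then show "f \<in> Nset T ?m" unfolding Nset_mem using fext by blast
  qed
qed


lemma part2:
  fixes T :: "'a::metric_space \<Rightarrow> 'a" and \<pi> :: "'a \<Rightarrow> 'b"
  assumes bT: "bij T" and cT: "continuous_on UNIV T" "continuous_on UNIV (inv T)"
    and cpt: "compact (UNIV :: 'a set)"
    and satN: "pi_pow_preimage \<pi> (d+1) (pi_pow \<pi> (d+1) ` Nset T (d+1)) = Nset T (d+1)"
  shows "char_factor T \<pi> d"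
proof -
  have "\<forall>k::nat. \<exists>K. finite K \<and> (UNIV::'a set) \<subseteq> (\<Union>x\<in>K. ball x (1 / real (Suc k)))"
  proof
    fix k :: nat
    have "1 / real (Suc k) > 0" by simp
    then show "\<exists>K. finite K \<and> (UNIV::'a set) \<subseteq> (\<Union>x\<in>K. ball x (1 / real (Suc k)))"
      using cpt unfolding compact_eq_totally_bounded by blast
  qed
  then obtain K where K: "\<And>k. finite (K k)" "\<And>k. (UNIV::'a set) \<subseteq> (\<Union>x\<in>K k. ball x (1 / real (Suc k)))"
    by metis
  define IDX where "IDX = (\<Union>k. (\<lambda>c. (c, 1 / real (Suc k))) ` (PiE {1..d} (\<lambda>_. K k)))"
  have fin: "finite ((\<lambda>c. (c, 1 / real (Suc k))) ` (PiE {1..d} (\<lambda>_. K k)))" for k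
    using K(1) by (simp add: finite_PiE)
  have cIDX: "countable IDX" unfolding IDX_def
    by (rule countable_UN[OF countableI_type]) (rule countable_finite, rule fin)
  define F where "F = (\<lambda>(c, r). {x. \<exists>n. \<forall>j\<in>{1..d}. tpow T (int j * n) x \<in> ball (c j) r})"
  define D where "D = (\<lambda>cr. F cr \<union> - closure (F cr))"
  define \<Omega> where "\<Omega> = \<Inter> (D ` IDX)"
  have oF: "open (F cr)" for cr
  proof -
    obtain c r where cr: "cr = (c, r)" by fastforce
    have "F cr = (\<Union>n. \<Inter>j\<in>{1..d}. tpow T (int j * n) -` ball (c j) r)"
      unfolding F_def cr by blast
    moreover have vo: "open (tpow T (int j * n) -` ball (c j) r)" for j n
      by (rule open_vimage[OF open_ball continuous_tpow[OF cT]])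
    have "open (\<Union>n. \<Inter>j\<in>{1..d}. tpow T (int j * n) -` ball (c j) r)"
    proof (rule open_UN, rule ballI)
      fix n :: int
      show "open (\<Inter>j\<in>{1..d}. tpow T (int j * n) -` ball (c j) r)"
        by (rule open_INT[OF finite_atLeastAtMost], rule ballI, rule vo)
    qed
    ultimately show ?thesis by simp
  qed
  have oD: "open (D cr)" for cr
  proof -
    show ?thesis unfolding D_def by (intro open_Un open_Compl closed_closure oF)
  qed
  have dD: "closure (D cr) = UNIV" for cr
  proof -
    have "F cr \<subseteq> D cr" unfolding D_def by (rule Un_upper1)
    then have a: "closure (F cr) \<subseteq> closure (D cr)" by (rule closure_mono)
    have "- closure (F cr) \<subseteq> D cr" unfolding D_def by (rule Un_upper2)
    then have b: "- closure (F cr) \<subseteq> closure (D cr)" using closure_subset[of "D cr"] by (rule order_trans)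
    have "UNIV \<subseteq> closure (D cr)"
    proof
      fix y :: 'a show "y \<in> closure (D cr)"
        using a b by (cases "y \<in> closure (F cr)") auto
    qed
    then show ?thesis by (rule top.extremum_uniqueI)
  qed
  have "euclidean closure_of \<Omega> = topspace euclidean"
    unfolding \<Omega>_def
  proof (rule Baire_category)
    have "compact_space (euclidean :: 'a topology)"
      using cpt by (simp add: compact_space_def compactin_euclidean_iff)
    then show "completely_metrizable_space (euclidean :: 'a topology) \<or>
      locally_compact_space (euclidean :: 'a topology) \<and> regular_space (euclidean :: 'a topology)"
      by (simp add: compact_imp_locally_compact_space regular_space_euclidean)
    show "countable (D ` IDX)" using cIDX by auto
    fix U assume "U \<in> D ` IDX"
    then show "openin euclidean U \<and> euclidean closure_of U = topspace euclidean"
      using oD dD by (auto simp: euclidean_closure_of)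
  qed
  then have dense: "closure \<Omega> = UNIV" by (simp add: euclidean_closure_of)
  have gd: "gdelta_in euclidean \<Omega>"
    unfolding gdelta_in_def relative_to_def intersection_of_def
  proof (rule exI[of _ \<Omega>], rule conjI, rule exI[of _ "D ` IDX"], intro conjI)
    show "countable (D ` IDX)" using cIDX by (rule countable_image)
    show "D ` IDX \<subseteq> Collect (openin euclidean)" using oD by auto
    show "\<Inter> (D ` IDX) = \<Omega>" by (simp add: \<Omega>_def)
    show "topspace euclidean \<inter> \<Omega> = \<Omega>" by simp
  qed
  have sat: "pi_pow_preimage \<pi> d (pi_pow \<pi> d ` Lset T d x) = Lset T d x" if x: "x \<in> \<Omega>" for x
  proof
    show "Lset T d x \<subseteq> pi_pow_preimage \<pi> d (pi_pow \<pi> d ` Lset T d x)"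
    proof
      fix l assume l: "l \<in> Lset T d x"
      then have "l \<in> extensional {1..d}" unfolding Lset_mem by blast
      then show "l \<in> pi_pow_preimage \<pi> d (pi_pow \<pi> d ` Lset T d x)"
        unfolding pi_pow_preimage_def using l by blast
    qed
  next
    show "pi_pow_preimage \<pi> d (pi_pow \<pi> d ` Lset T d x) \<subseteq> Lset T d x"
    proof
      fix w assume "w \<in> pi_pow_preimage \<pi> d (pi_pow \<pi> d ` Lset T d x)"
      then obtain l where wext: "w \<in> extensional {1..d}" and l: "l \<in> Lset T d x"
        and wl: "pi_pow \<pi> d w = pi_pow \<pi> d l"
        unfolding pi_pow_preimage_def by auto
      have wl': "\<pi> (w j) = \<pi> (l j)" if "j \<in> {1..d}" for j
        using fun_cong[OF wl, of j] that by (simp add: pi_pow_def)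
      define fl where "fl = restrict (\<lambda>i. if i = 1 then x else l (i - 1)) {1..d+1}"
      define fw where "fw = restrict (\<lambda>i. if i = 1 then x else w (i - 1)) {1..d+1}"
      have "fl \<in> Nset T (d+1)"
        unfolding Nset_mem
      proof (intro conjI allI impI)
        show "fl \<in> extensional {1..d+1}" by (simp add: fl_def)
        fix \<epsilon> :: real assume "\<epsilon> > 0"
        then obtain n where n: "\<forall>j\<in>{1..d}. dist (l j) (tpow T (int j * n) x) < \<epsilon>"
          using l unfolding Lset_mem by blast
        show "\<exists>x' p q. \<forall>i\<in>{1..d+1}. dist (fl i) (tpow T (p + int i * q) x') < \<epsilon>"
        proof (rule exI[of _ x], rule exI[of _ "-n"], rule exI[of _ n], intro ballI)
          fix i assume i: "i \<in> {1..d+1}"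
          show "dist (fl i) (tpow T (- n + int i * n) x) < \<epsilon>"
          proof (cases "i = 1")
            case True then show ?thesis using \<open>\<epsilon> > 0\<close> by (simp add: fl_def)
          next
            case False
            obtain j where j_def: "j = i - 1" by simp
            have j: "i = j + 1" "j \<in> {1..d}" using i False by (auto simp: j_def)
            have ex: "- n + int i * n = int j * n" using j by (simp add: algebra_simps)
            have "fl i = l j" using j by (simp add: fl_def)
            then show ?thesis unfolding ex using n j by simp
          qed
        qed
      qed
      moreover have "pi_pow \<pi> (d+1) fw = pi_pow \<pi> (d+1) fl"
      proof
        fix i show "pi_pow \<pi> (d+1) fw i = pi_pow \<pi> (d+1) fl i"
        proof (cases "i = 1")
          case True then show ?thesis by (simp add: pi_pow_def fw_def fl_def)
        next
          case False
          show ?thesis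
          proof (cases "i \<in> {1..d+1}")
            case True
            then have "i - 1 \<in> {1..d}" using False by auto
            then show ?thesis using False True wl'[of "i - 1"] by (simp add: pi_pow_def fw_def fl_def)
          qed (auto simp: pi_pow_def)
        qed
      qed
      ultimately have "fw \<in> pi_pow_preimage \<pi> (d+1) (pi_pow \<pi> (d+1) ` Nset T (d+1))"
        unfolding pi_pow_preimage_def fw_def by (auto simp: image_iff)
      then have fwN: "fw \<in> Nset T (d+1)" using satN by simp
      show "w \<in> Lset T d x" unfolding Lset_mem
      proof (intro conjI allI impI)
        show "w \<in> extensional {1..d}" by fact
        fix e :: real assume e: "e > 0"
        obtain k :: nat where k: "1 / real (Suc k) \<le> e / 2"
        proof -
          have "e / 2 > 0" using e by simp
          then obtain k where "inverse (real (Suc k)) < e / 2" using reals_Archimedean by blast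
          then have "1 / real (Suc k) \<le> e / 2" by (simp add: inverse_eq_divide)
          then show ?thesis by (rule that)
        qed
        define r where "r = 1 / real (Suc k)"
        have r0: "r > 0" by (simp add: r_def)
        define c where "c = restrict (\<lambda>j. SOME c. c \<in> K k \<and> w j \<in> ball c r) {1..d}"
        have c: "c j \<in> K k \<and> w j \<in> ball (c j) r" if "j \<in> {1..d}" for j
        proof -
          have "w j \<in> (\<Union>x\<in>K k. ball x r)" using K(2)[of k] unfolding r_def by blast
          then have "\<exists>c. c \<in> K k \<and> w j \<in> ball c r" by blast
          from someI_ex[OF this] show ?thesis using that unfolding c_def by simp
        qed
        have "c \<in> extensional {1..d}" unfolding c_def by simp
        then have cP: "c \<in> PiE {1..d} (\<lambda>_. K k)" using c by (simp add: PiE_iff)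
        have "(c, r) \<in> IDX" unfolding IDX_def r_def using cP by blast
        then have "x \<in> D (c, r)" using x by (auto simp: \<Omega>_def)
        have inF: "x \<in> F (c, r)"
        proof (rule ccontr)
          assume nF: "x \<notin> F (c, r)"
          with \<open>x \<in> D (c, r)\<close> have "x \<in> - closure (F (c, r))" by (auto simp: D_def)
          then obtain \<epsilon>0 where \<epsilon>0: "\<epsilon>0 > 0" "ball x \<epsilon>0 \<subseteq> - closure (F (c, r))"
            using open_contains_ball[of "- closure (F (c, r))"] by auto
          have "\<exists>\<epsilon>>0. \<forall>\<epsilon>'. 0 < \<epsilon>' \<and> \<epsilon>' \<le> \<epsilon> \<longrightarrow> ball (w j) \<epsilon>' \<subseteq> ball (c j) r" if jd: "j \<in> {1..d}" for j
          proof -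
            obtain \<epsilon> where "\<epsilon> > 0" "ball (w j) \<epsilon> \<subseteq> ball (c j) r"
              using c[OF jd] open_contains_ball[of "ball (c j) r"] by (meson open_ball)
            then show ?thesis by (intro exI[of _ \<epsilon>]) auto
          qed
          then obtain \<epsilon>1 where \<epsilon>1: "\<epsilon>1 > 0" "\<forall>j\<in>{1..d}. ball (w j) \<epsilon>1 \<subseteq> ball (c j) r"
            using finite_eps[of "{1..d}" "\<lambda>j \<epsilon>. ball (w j) \<epsilon> \<subseteq> ball (c j) r"] by auto
          obtain y p q where ypq: "\<forall>i\<in>{1..d+1}. dist (fw i) (tpow T (p + int i * q) y) < min \<epsilon>0 \<epsilon>1"
            using fwN \<epsilon>0(1) \<epsilon>1(1) unfolding Nset_mem by (meson min_less_iff_conj)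
          define y1 where "y1 = tpow T (p + q) y"
          have "dist x y1 < \<epsilon>0" using ypq[rule_format, of 1] by (simp add: fw_def y1_def)
          then have "y1 \<notin> F (c, r)" using \<epsilon>0 closure_subset by (auto simp: subset_iff)
          moreover have "y1 \<in> F (c, r)"
          proof -
            have "tpow T (int j * q) y1 \<in> ball (c j) r" if j: "j \<in> {1..d}" for j
            proof -
              have "int j * q + (p + q) = p + int (j+1) * q" by (simp add: algebra_simps)
              then have eq: "tpow T (int j * q) y1 = tpow T (p + int (j+1) * q) y"
                unfolding y1_def tpow_add[OF bT] by (metis (no_types))
              have "dist (w j) (tpow T (p + int (j+1) * q) y) < \<epsilon>1"
                using ypq[rule_format, of "j+1"] j by (simp add: fw_def)
              then show ?thesis using \<epsilon>1(2) j unfolding eq by (auto simp: subset_iff)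
            qed
            then show ?thesis unfolding F_def by (simp only: mem_Collect_eq prod.case) blast
          qed
          ultimately show False by simp
        qed
        then obtain n where n: "\<forall>j\<in>{1..d}. tpow T (int j * n) x \<in> ball (c j) r"
          unfolding F_def by auto
        show "\<exists>n. \<forall>j\<in>{1..d}. dist (w j) (tpow T (int j * n) x) < e"
        proof (rule exI[of _ n], intro ballI)
          fix j assume j: "j \<in> {1..d}"
          have "dist (w j) (c j) < r" using c[OF j] by (simp add: dist_commute)
          moreover have "dist (c j) (tpow T (int j * n) x) < r" using n j by auto
          ultimately have "dist (w j) (tpow T (int j * n) x) < r + r"
            using dist_triangle[of "w j" "tpow T (int j * n) x" "c j"] by linarith
          then show "dist (w j) (tpow T (int j * n) x) < e" using k r_def by linarith
        qed
      qed
    qed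
  qed
  show ?thesis unfolding char_factor_def using gd dense sat by blast
qed


theorem theorem4p5:
  fixes T :: "'a::metric_space \<Rightarrow> 'a" and S :: "'b::metric_space \<Rightarrow> 'b"
    and \<pi> :: "'a \<Rightarrow> 'b" and d :: nat
  assumes "minimal_sys T" and "minimal_sys S" and "factor_map T S \<pi>"
  shows "(char_factor T \<pi> d \<and> is_open_map \<pi> \<longrightarrow>
            pi_pow_preimage \<pi> (d+1) (Nset S (d+1)) = Nset T (d+1))
       \<and> (pi_pow_preimage \<pi> (d+1) (pi_pow \<pi> (d+1) ` Nset T (d+1)) = Nset T (d+1)
            \<longrightarrow> char_factor T \<pi> d)"
proof -
  from assms(3) have tT: "tds T" and tS: "tds S" and cpi: "continuous_on UNIV \<pi>"
    and conj: "\<pi> \<circ> T = S \<circ> \<pi>"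
    unfolding factor_map_def by auto
  from tT have cpt: "compact (UNIV :: 'a set)" and bT: "bij T" and cT: "continuous_on UNIV T"
    "continuous_on UNIV (inv T)" unfolding tds_def by auto
  from tS have bS: "bij S" and cS: "continuous_on UNIV S" "continuous_on UNIV (inv S)"
    unfolding tds_def by auto
  show ?thesis
  proof (intro conjI impI)
    assume a: "char_factor T \<pi> d \<and> is_open_map \<pi>"
    then obtain \<Omega> where \<Omega>: "closure \<Omega> = UNIV"
      "\<forall>x\<in>\<Omega>. pi_pow_preimage \<pi> d (pi_pow \<pi> d ` Lset T d x) = Lset T d x"
      unfolding char_factor_def by blast
    show "pi_pow_preimage \<pi> (d+1) (Nset S (d+1)) = Nset T (d+1)"
      by (rule part1[OF bT bS cS cpi cpt conj _ \<Omega>(1) \<Omega>(2)]) (use a in auto)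
  next
    assume "pi_pow_preimage \<pi> (d+1) (pi_pow \<pi> (d+1) ` Nset T (d+1)) = Nset T (d+1)"
    then show "char_factor T \<pi> d" by (rule part2[OF bT cT cpt])
  qed
qed

end
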